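(* For all $a,b\in\mathbb{C}$ and integers $n\ge0$, $$\sum_{k=0}^n\binom{n}{k}a^kb^{n-k}H_k(3)=H_n(3)(a+b)^n-3\sum_{k=1}^n(a+b)^{n-k}b^k\,\frac{H_{k-1}^2-H_{k-1}^{(2)}-2H_{k-1}H_{n-k}+H_{n-k}^2-H_{n-k}^{(2)}}{k}.$$
   Context: $H_n=\sum_{k=1}^n\frac1k$ (with $H_0=0$) and $H_n^{(2)}=\sum_{k=1}^n\frac1{k^2}$. The multiple harmonic-like number $H_n(3)=\sum_{1\le k_1+k_2+k_3\le n}\frac{1}{k_1k_2k_3}$ (over positive integers $k_1,k_2,k_3$), with $H_0(3)=0$. Convention $0^0=1$. *)

theory Defs
  imports Complex_Main
begin

definition harm1 :: "nat \<Rightarrow> real" where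
  "harm1 n = (\<Sum>k=1..n. 1 / real k)"

definition harm2 :: "nat \<Rightarrow> real" where
  "harm2 n = (\<Sum>k=1..n. 1 / (real k)^2)"

definition harm3 :: "nat \<Rightarrow> real" where
  "harm3 n = (\<Sum>(k1,k2,k3) \<in> {(k1,k2,k3). 1 \<le> k1 \<and> 1 \<le> k2 \<and> 1 \<le> k3 \<and> k1 + k2 + k3 \<le> n}.
                 1 / (real k1 * real k2 * real k3))"

end

theory Submission
  imports Defs
begin

lemma H0[simp]: "harm1 0 = 0" by (simp add: harm1_def)
lemma HS: "harm1 (Suc n) = harm1 n + 1 / real (Suc n)" by (simp add: harm1_def)
lemma H20[simp]: "harm2 0 = 0" by (simp add: harm2_def)
lemma H2S: "harm2 (Suc n) = harm2 n + 1 / (real (Suc n))^2" by (simp add: harm2_def)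

lemma refl_sum: "(\<Sum>k=1..N. 1 / real (Suc N - k)) = harm1 N"
proof -
  have "harm1 N = (\<Sum>k=1..N. 1 / real (N + 1 - k))"
    unfolding harm1_def by (rule sum.atLeastAtMost_rev)
  also have "\<dots> = (\<Sum>k=1..N. 1 / real (Suc N - k))" by simp
  finally show ?thesis by simp
qed

lemma R_sum: "(\<Sum>k=1..N. 1 / (real k * real (Suc N - k))) = 2 * harm1 N / real (Suc N)"
proof -
  have "(\<Sum>k=1..N. 1 / (real k * real (Suc N - k))) = (\<Sum>k=1..N. (1 / real k + 1 / real (Suc N - k)) / real (Suc N))"
  proof (rule sum.cong)
    fix k assume "k \<in> {1..N}"
    then have k: "1 \<le> k" "k \<le> N" by auto
    define x where "x = real k"
    define y where "y = real (Suc N - k)"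
    have e: "real (Suc N) = x + y" using k by (simp add: x_def y_def of_nat_diff)
    have "x > 0" "y > 0" using k by (auto simp: x_def y_def)
    then show "1 / (real k * real (Suc N - k)) = (1 / real k + 1 / real (Suc N - k)) / real (Suc N)"
    proof -
      have "1/x+1/y = (x+y)/(x*y)" using \<open>x>0\<close> \<open>y>0\<close> by (simp add: field_simps)
      moreover have "x + y \<noteq> 0" using \<open>x>0\<close> \<open>y>0\<close> by simp
      ultimately show ?thesis unfolding e x_def[symmetric] y_def[symmetric] by simp
    qed
  qed simp
  also have "\<dots> = (harm1 N + harm1 N) / real (Suc N)"
  proof -
    have h: "(\<Sum>k=1..N. 1 / real k) = harm1 N" by (simp add: harm1_def)
    show ?thesis by (simp only: sum_divide_distrib[symmetric] sum.distrib refl_sum h)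
  qed
  finally show ?thesis by simp
qed

definition tt :: "nat \<Rightarrow> real" where "tt N = (\<Sum>k=1..N. harm1 (N - k) / real k)"

lemma tt_closed: "tt N = harm1 N ^ 2 - harm2 N"
proof (induction N)
  case 0 then show ?case by (simp add: tt_def)
next
  case (Suc N)
  have "tt (Suc N) = (\<Sum>k=1..N. harm1 (Suc N - k) / real k) + harm1 0 / real (Suc N)"
    unfolding tt_def by simp
  also have "(\<Sum>k=1..N. harm1 (Suc N - k) / real k) = (\<Sum>k=1..N. harm1 (N - k) / real k + 1 / (real k * real (Suc N - k)))"
  proof (rule sum.cong)
    fix k assume "k \<in> {1..N}"
    then have "Suc N - k = Suc (N - k)" by auto
    then show "harm1 (Suc N - k) / real k = harm1 (N - k) / real k + 1 / (real k * real (Suc N - k))"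
      by (simp only: HS add_divide_distrib) simp
  qed simp
  also have "\<dots> = tt N + 2 * harm1 N / real (Suc N)"
    by (simp only: sum.distrib tt_def R_sum)
  finally have e: "tt (Suc N) = tt N + 2 * harm1 N * (1 / real (Suc N))" by (simp add: harm1_def)
  define u where "u = 1 / real (Suc N)"
  have "tt (Suc N) = (harm1 N ^ 2 - harm2 N) + 2 * harm1 N * u" using e Suc by (simp add: u_def)
  also have "\<dots> = (harm1 N + u)^2 - (harm2 N + u^2)" by (simp add: power2_eq_square field_simps)
  also have "\<dots> = harm1 (Suc N) ^ 2 - harm2 (Suc N)" by (simp only: HS H2S u_def power_one_over)
  finally show ?case .
qed

lemma half_sum: "(\<Sum>j=1..N. harm1 (j - 1) / real j) = (harm1 N ^ 2 - harm2 N) / 2"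
proof (induction N)
  case 0 then show ?case by simp
next
  case (Suc N)
  define u where "u = 1 / real (Suc N)"
  have "(\<Sum>j=1..Suc N. harm1 (j - 1) / real j) = (\<Sum>j=1..N. harm1 (j - 1) / real j) + harm1 N / real (Suc N)"
    by simp
  also have "\<dots> = (harm1 N ^ 2 - harm2 N) / 2 + harm1 N * u" using Suc by (simp add: u_def)
  also have "\<dots> = ((harm1 N + u)^2 - (harm2 N + u^2))/2"
    by (simp add: power2_eq_square field_simps)
  also have "\<dots> = (harm1 (Suc N) ^ 2 - harm2 (Suc N)) / 2"
    by (simp only: HS H2S u_def power_one_over)
  finally show ?case .
qed

lemma harm3_nested: "harm3 n = (\<Sum>k1=1..n. tt (n - k1) / real k1)"
proof -
  have S: "{(k1,k2,k3). 1 \<le> k1 \<and> 1 \<le> k2 \<and> 1 \<le> k3 \<and> k1 + k2 + k3 \<le> n}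
      = Sigma {1..n} (\<lambda>k1. Sigma {1..n-k1} (\<lambda>k2. {1..n-k1-k2}))" by auto
  have "harm3 n = (\<Sum>k1\<in>{1..n}. \<Sum>p\<in>Sigma {1..n-k1} (\<lambda>k2. {1..n-k1-k2}).
          (\<lambda>(k2,k3). 1 / (real k1 * real k2 * real k3)) p)"
    unfolding harm3_def S by (subst sum.Sigma[symmetric]) (auto simp: case_prod_beta)
  also have "\<dots> = (\<Sum>k1\<in>{1..n}. \<Sum>k2\<in>{1..n-k1}. \<Sum>k3\<in>{1..n-k1-k2}. 1 / (real k1 * real k2 * real k3))"
    by (subst sum.Sigma[symmetric]) auto
  also have "\<dots> = (\<Sum>k1=1..n. tt (n - k1) / real k1)"
  proof (rule sum.cong[OF refl])
    fix k1
    have "(\<Sum>k2\<in>{1..n-k1}. \<Sum>k3\<in>{1..n-k1-k2}. 1 / (real k1 * real k2 * real k3))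
       = (\<Sum>k2\<in>{1..n-k1}. \<Sum>k3\<in>{1..n-k1-k2}. 1 / real k3 / real k2 / real k1)"
      by (intro sum.cong refl) (simp add: field_simps)
    also have "\<dots> = (\<Sum>k2\<in>{1..n-k1}. (\<Sum>k3\<in>{1..n-k1-k2}. 1 / real k3) / real k2 / real k1)"
      by (simp only: sum_divide_distrib)
    also have "\<dots> = tt (n - k1) / real k1"
      by (simp only: tt_def harm1_def sum_divide_distrib diff_diff_left)
    finally show "(\<Sum>k2\<in>{1..n-k1}. \<Sum>k3\<in>{1..n-k1-k2}. 1 / (real k1 * real k2 * real k3)) = tt (n - k1) / real k1" .
  qed
  finally show ?thesis .
qed

lemma pf: assumes "x>0" "y>0" shows "2/(x+y)*(h/x+h/y) = 2*h/(x*y::real)"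
proof -
  have a: "h/x+h/y = h*(x+y)/(x*y)" using assms by (simp add: field_simps)
  have "x+y \<noteq> 0" using assms by simp
  then show ?thesis unfolding a by simp
qed

lemma sq_aux: "((h::real)+u)^2 - (h2+u^2) - (h^2 - h2) = 2*h*u"
  by (simp add: power2_eq_square field_simps)

lemma tt_diff: "tt (Suc j) - tt j = 2 * harm1 j / real (Suc j)"
  by (simp only: tt_closed HS H2S power_one_over[symmetric] sq_aux) simp

lemma harm3_diff: "harm3 (Suc m) - harm3 m = 3 * (harm1 m ^ 2 - harm2 m) / real (Suc m)"
proof -
  have "harm3 (Suc m) = (\<Sum>k=1..m. tt (Suc m - k) / real k)"
    unfolding harm3_nested by (simp add: tt_def)
  then have "harm3 (Suc m) - harm3 m = (\<Sum>k=1..m. (tt (Suc (m - k)) - tt (m - k)) / real k)"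
    unfolding harm3_nested[of m] by (simp add: sum_subtractf[symmetric] diff_divide_distrib Suc_diff_le)
  also have "\<dots> = (\<Sum>k=1..m. 2 * harm1 (m - k) / (real k * real (Suc m - k)))"
    by (rule sum.cong[OF refl]) (simp add: tt_diff Suc_diff_le del: of_nat_Suc)
  also have "\<dots> = (\<Sum>k=1..m. 2 / real (Suc m) * (harm1 (m - k) / real k + harm1 (m - k) / real (Suc m - k)))"
  proof (rule sum.cong[OF refl])
    fix k assume "k \<in> {1..m}"
    then have k: "1 \<le> k" "k \<le> m" by auto
    define x where "x = real k"
    define y where "y = real (Suc m - k)"
    have e: "real (Suc m) = x + y" using k by (simp add: x_def y_def of_nat_diff)
    have "x > 0" "y > 0" using k by (auto simp: x_def y_def)
    then have "2 / (x+y) * (harm1 (m - k) / x + harm1 (m - k) / y) = 2 * harm1 (m - k) / (x * y)"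
      by (rule pf)
    then show "2 * harm1 (m - k) / (real k * real (Suc m - k)) = 2 / real (Suc m) * (harm1 (m - k) / real k + harm1 (m - k) / real (Suc m - k))"
      unfolding e x_def[symmetric] y_def[symmetric] by simp
  qed
  also have "\<dots> = 2 / real (Suc m) * (tt m + (\<Sum>k=1..m. harm1 (m - k) / real (Suc m - k)))"
    by (simp only: sum_distrib_left[symmetric] sum.distrib tt_def)
  also have "(\<Sum>k=1..m. harm1 (m - k) / real (Suc m - k)) = (\<Sum>j=1..m. harm1 (j - 1) / real j)"
  proof -
    have "(\<Sum>j=1..m. harm1 (j - 1) / real j) = (\<Sum>k=1..m. harm1 (m + 1 - k - 1) / real (m + 1 - k))"
      by (rule sum.atLeastAtMost_rev)
    also have "\<dots> = (\<Sum>k=1..m. harm1 (m - k) / real (Suc m - k))" by simp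
    finally show ?thesis by simp
  qed
  finally show ?thesis by (simp only: half_sum tt_closed) (simp add: field_simps)
qed

definition altS :: "(nat \<Rightarrow> real) \<Rightarrow> nat \<Rightarrow> real" where
  "altS e m = (\<Sum>i\<le>m. (-1)^(m-i) * real (m choose i) * e i)"

lemma neg1_split: "i \<le> m \<Longrightarrow> ((-1::'a::comm_ring_1)^(m-i)) = (-1)^m * (-1)^i"
proof -
  assume "i \<le> m"
  then have "(-1::'a)^m = (-1)^(m-i) * (-1)^i" by (simp add: power_add[symmetric])
  then have "(-1::'a)^m * (-1)^i = (-1)^(m-i) * ((-1)^i * (-1)^i)" by (simp add: mult_ac)
  also have "(-1::'a)^i * (-1)^i = 1" by (simp add: power_add[symmetric] )
  finally show ?thesis by simp
qed

lemma alt_const: "m \<ge> 1 \<Longrightarrow> altS (\<lambda>i. d + f i) m = altS f m"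
proof -
  assume m: "m \<ge> 1"
  have "altS (\<lambda>i. d + f i) m = (\<Sum>i\<le>m. (-1)^(m-i) * real (m choose i) * d) + altS f m"
    unfolding altS_def by (simp add: ring_distribs sum.distrib)
  also have "(\<Sum>i\<le>m. (-1)^(m-i) * real (m choose i) * d) = (\<Sum>i\<le>m. d * (-1)^m * ((-1)^i * real (m choose i)))"
    by (rule sum.cong) (simp_all add: neg1_split)
  also have "\<dots> = d * (-1)^m * (\<Sum>i\<le>m. (-1)^i * real (m choose i))"
    by (simp only: sum_distrib_left)
  also have "(\<Sum>i\<le>m. (-1)^i * real (m choose i)) = 0" using m by (intro choose_alternating_sum) simp
  finally show ?thesis by simp
qed

lemma alt_rec: assumes "e 0 = 0" shows "altS e (Suc m) = altS (\<lambda>i. e (Suc i)) m - altS e m"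
proof -
  have "altS e (Suc m) = (\<Sum>i\<le>m. (-1)^(m-i) * real (Suc m choose Suc i) * e (Suc i))"
    unfolding altS_def by (subst sum.atMost_Suc_shift) (simp add: assms)
  also have "\<dots> = altS (\<lambda>i. e (Suc i)) m + (\<Sum>i\<le>m. (-1)^(m-i) * real (m choose Suc i) * e (Suc i))"
    unfolding altS_def by (simp add: ring_distribs sum.distrib)
  also have "(\<Sum>i\<le>m. (-1)^(m-i) * real (m choose Suc i) * e (Suc i)) = - altS e m"
  proof (cases m)
    case 0 then show ?thesis by (simp add: altS_def assms)
  next
    case (Suc k)
    have "altS e m = (\<Sum>i\<le>k. (-1)^(k-i) * real (Suc k choose Suc i) * e (Suc i))"
      unfolding altS_def Suc by (subst sum.atMost_Suc_shift) (simp add: assms)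
    moreover have "(\<Sum>i\<le>Suc k. (-1)^(Suc k-i) * real (Suc k choose Suc i) * e (Suc i))
        = (\<Sum>i\<le>k. (-1)^(Suc k-i) * real (Suc k choose Suc i) * e (Suc i))"
      by (simp del: binomial_Suc_Suc add: binomial_eq_0)
    moreover have "(\<Sum>i\<le>k. (-1)^(Suc k-i) * real (Suc k choose Suc i) * e (Suc i))
        = - (\<Sum>i\<le>k. (-1)^(k-i) * real (Suc k choose Suc i) * e (Suc i))"
      unfolding sum_negf[symmetric] by (rule sum.cong) (simp_all add: Suc_diff_le del: binomial_Suc_Suc)
    ultimately show ?thesis using Suc by simp
  qed
  finally show ?thesis by simp
qed

definition FF :: "nat \<Rightarrow> nat \<Rightarrow> real" where
  "FF n k = harm1 (k - 1) ^ 2 - harm2 (k - 1) - 2 * harm1 (k - 1) * harm1 (n - k)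
                          + harm1 (n - k) ^ 2 - harm2 (n - k)"

lemma Falg:
  fixes mm r A B A2 B2 :: real
  assumes "mm > 0" "r > 0"
  shows "mm*((A+1/mm)^2 - (A2+1/mm^2) - 2*(A+1/mm)*B + B^2 - B2)
     = (mm+r)*(A^2 - A2 - 2*A*B + B^2 - B2) - r*(A^2 - A2 - 2*A*(B+1/r) + (B+1/r)^2 - (B2+1/r^2))"
  using assms by (simp add: power2_eq_square field_simps)

lemma altD: "1 \<le> m \<Longrightarrow> m \<le> n \<Longrightarrow>
  altS (\<lambda>i. harm3 n - harm3 (n - i)) m = 3 * FF n m / (real m * real (n choose m))"
proof (induction m arbitrary: n)
  case 0 then show ?case by simp
next
  case (Suc m n)
  then obtain j where nj: "n = Suc j" and mj: "m \<le> j" by (cases n) auto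
  show ?case
  proof (cases "m = 0")
    case True
    have "altS (\<lambda>i. harm3 n - harm3 (n - i)) 1 = harm3 (Suc j) - harm3 j"
      unfolding altS_def nj by simp
    then show ?thesis using True unfolding nj harm3_diff FF_def by simp
  next
    case False
    then have m1: "1 \<le> m" by simp
    have "altS (\<lambda>i. harm3 n - harm3 (n - i)) (Suc m)
        = altS (\<lambda>i. harm3 n - harm3 (n - Suc i)) m - altS (\<lambda>i. harm3 n - harm3 (n - i)) m"
      by (rule alt_rec) simp
    also have "altS (\<lambda>i. harm3 n - harm3 (n - Suc i)) m
       = altS (\<lambda>i. (harm3 n - harm3 j) + (harm3 j - harm3 (j - i))) m"
      unfolding nj by simp
    also have "\<dots> = altS (\<lambda>i. harm3 j - harm3 (j - i)) m" using m1 by (rule alt_const)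
    also have "\<dots> = 3 * FF j m / (real m * real (j choose m))" using Suc.IH[OF m1 mj] .
    also have "altS (\<lambda>i. harm3 n - harm3 (n - i)) m = 3 * FF n m / (real m * real (n choose m))"
      using Suc.IH[OF m1] Suc.prems by simp
    finally have eq: "altS (\<lambda>i. harm3 n - harm3 (n - i)) (Suc m) =
       3 * FF j m / (real m * real (j choose m)) - 3 * FF n m / (real m * real (n choose m))" .
    define X where "X = real (n * (j choose m))"
    have Xp: "X > 0" unfolding X_def nj using zero_less_binomial[OF mj] by (simp only: of_nat_0_less_iff) simp
    have b1: "real (Suc m) * real (n choose Suc m) = X"
      unfolding X_def using binomial_absorption[of m n] nj by (simp only: of_nat_mult[symmetric]) simp
    have b2: "real (n - m) * real (n choose m) = X"
      unfolding X_def using binomial_absorb_comp[of n m] nj by (simp only: of_nat_mult[symmetric]) simp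
    define mm where "mm = real m"
    define r where "r = real (n - m)"
    have mmp: "mm > 0" using m1 by (simp add: mm_def)
    have rp: "r > 0" using mj nj by (simp add: r_def)
    have nsum: "real n = mm + r" using mj nj by (simp add: mm_def r_def of_nat_diff)
    have Hm: "harm1 m = harm1 (m - 1) + 1 / mm"
      using m1 HS[of "m - 1"] by (simp add: mm_def)
    have H2m: "harm2 m = harm2 (m - 1) + 1 / mm^2"
      using m1 H2S[of "m - 1"] by (simp add: mm_def power_one_over)
    have Hr: "harm1 (n - m) = harm1 (j - m) + 1 / r"
      using HS[of "j - m"] mj nj by (simp add: r_def Suc_diff_le)
    have H2r: "harm2 (n - m) = harm2 (j - m) + 1 / r^2"
      using H2S[of "j - m"] mj nj by (simp add: r_def Suc_diff_le power_one_over)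
    have key: "mm * FF n (Suc m) = real n * FF j m - r * FF n m"
    proof -
      have nm: "n - Suc m = j - m" using nj by simp
      show ?thesis
        by (simp only: FF_def nm diff_Suc_1 Hm H2m Hr H2r nsum) (rule Falg[OF mmp rp])
    qed
    have np: "real n > 0" using nj by simp
    have Xn: "X = real n * real (j choose m)" by (simp only: X_def of_nat_mult)
    have Bj: "real (j choose m) = X / real n" using np unfolding Xn by simp
    have Bn: "real (n choose m) = X / r" using b2 rp by (simp add: r_def field_simps)
    have Bs: "real (n choose Suc m) = X / real (Suc m)" using b1 by (simp add: field_simps)
    have "3*FF j m/(mm*(X/real n)) - 3*FF n m/(mm*(X/r)) = 3*(real n*FF j m - r*FF n m)/(mm*X)"
      using Xp mmp rp np by (simp add: field_simps)
    also have "\<dots> = 3*(mm*FF n (Suc m))/(mm*X)" by (simp add: key)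
    also have "\<dots> = 3*FF n (Suc m)/X" using mmp by simp
    finally show ?thesis unfolding eq Bj Bn b1 mm_def[symmetric] .
  qed
qed

lemma tri_swap: "(\<Sum>m\<le>(n::nat). \<Sum>i\<le>m. f m i) = (\<Sum>i\<le>n. \<Sum>m=i..n. (f m i :: 'a::comm_monoid_add))"
proof (induction n)
  case 0 then show ?case by simp
next
  case (Suc n)
  have "(\<Sum>i\<le>Suc n. \<Sum>m=i..Suc n. f m i) = (\<Sum>i\<le>n. \<Sum>m=i..Suc n. f m i) + f (Suc n) (Suc n)"
    by simp
  also have "(\<Sum>i\<le>n. \<Sum>m=i..Suc n. f m i) = (\<Sum>i\<le>n. (\<Sum>m=i..n. f m i) + f (Suc n) i)"
    by (rule sum.cong) auto
  finally show ?case using Suc by (simp add: sum.distrib add.assoc)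
qed

lemma shift_sum: "i \<le> (n::nat) \<Longrightarrow> (\<Sum>m=i..n. g m) = (\<Sum>j\<le>n-i. (g (i + j) :: 'a::comm_monoid_add))"
proof -
  assume "i \<le> n"
  then have "{i..n} = {0+i..(n-i)+i}" by simp
  then have "(\<Sum>m=i..n. g m) = (\<Sum>j=0..n-i. g (j + i))" by (simp only: sum.shift_bounds_cl_nat_ivl)
  then show ?thesis by (simp add: atLeast0AtMost add.commute)
qed

lemma neg_plus_eq: "-(b::'a::comm_ring_1) + s = s - b" by simp

lemma rearr2: "(C::'a::comm_ring_1)*S*(Bi*Bj)*(M*D*x) = (C*D)*(x*Bi*Bj*M*S)"
  by (simp add: mult_ac)

lemma rearr: "((A::'a::comm_ring_1)*B)*(E*P*Q*R*S) = (A*E*P)*(B*(R*Q)*S)"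
  by (simp add: mult_ac)

lemma lemE:
  fixes s b :: "'a::comm_ring_1" and e :: "nat \<Rightarrow> 'a"
  shows "(\<Sum>m\<le>n. of_nat (n choose m) * s^(n-m) * b^m * (\<Sum>i\<le>m. (-1)^(m-i) * of_nat (m choose i) * e i))
     = (\<Sum>i\<le>n. of_nat (n choose i) * e i * b^i * (s-b)^(n-i))"
proof -
  have "(\<Sum>m\<le>n. of_nat (n choose m) * s^(n-m) * b^m * (\<Sum>i\<le>m. (-1)^(m-i) * of_nat (m choose i) * e i))
     = (\<Sum>m\<le>n. \<Sum>i\<le>m. of_nat (n choose m) * s^(n-m) * b^m * ((-1)^(m-i) * of_nat (m choose i) * e i))"
    by (simp only: sum_distrib_left)
  also have "\<dots> = (\<Sum>i\<le>n. \<Sum>m=i..n. of_nat (n choose m) * s^(n-m) * b^m * ((-1)^(m-i) * of_nat (m choose i) * e i))"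
    by (rule tri_swap)
  also have "\<dots> = (\<Sum>i\<le>n. of_nat (n choose i) * e i * b^i * (s-b)^(n-i))"
  proof (rule sum.cong[OF refl])
    fix i assume "i \<in> {..n}"
    then have i: "i \<le> n" by simp
    have "(\<Sum>m=i..n. of_nat (n choose m) * s^(n-m) * b^m * ((-1)^(m-i) * of_nat (m choose i) * e i))
      = (\<Sum>j\<le>n-i. of_nat (n choose (i+j)) * s^(n-(i+j)) * b^(i+j) * ((-1)^(i+j-i) * of_nat ((i+j) choose i) * e i))"
      using i by (rule shift_sum)
    also have "\<dots> = (\<Sum>j\<le>n-i. (of_nat (n choose i) * e i * b^i) * (of_nat ((n-i) choose j) * (-b)^j * s^((n-i)-j)))"
    proof (rule sum.cong[OF refl])
      fix j assume "j \<in> {..n-i}"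
      then have j: "j \<le> n - i" by simp
      have c: "(n choose (i+j)) * ((i+j) choose i) = (n choose i) * ((n-i) choose j)"
        using choose_mult[of i "i+j" n] i j by simp
      have c': "(of_nat (n choose (i+j)) :: 'a) * of_nat ((i+j) choose i) = of_nat (n choose i) * of_nat ((n-i) choose j)"
        by (simp only: of_nat_mult[symmetric] c)
      have "of_nat (n choose (i+j)) * s^(n-(i+j)) * b^(i+j) * ((-1)^(i+j-i) * of_nat ((i+j) choose i) * e i)
        = ((of_nat (n choose (i+j)) :: 'a) * of_nat ((i+j) choose i)) * (e i * b^i * b^j * (-1)^j * s^(n-i-j))"
        by (simp only: power_add diff_diff_left add_diff_cancel_left' rearr2)
      also have "\<dots> = (of_nat (n choose i) * of_nat ((n-i) choose j)) * (e i * b^i * b^j * (-1)^j * s^(n-i-j))"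
        by (simp only: c')
      also have "\<dots> = (of_nat (n choose i) * e i * b^i) * (of_nat ((n-i) choose j) * (-b)^j * s^((n-i)-j))"
        unfolding power_minus[of b] by (rule rearr)
      finally show "of_nat (n choose (i+j)) * s^(n-(i+j)) * b^(i+j) * ((-1)^(i+j-i) * of_nat ((i+j) choose i) * e i)
        = (of_nat (n choose i) * e i * b^i) * (of_nat ((n-i) choose j) * (-b)^j * s^((n-i)-j))" .
    qed
    also have "\<dots> = of_nat (n choose i) * e i * b^i * (-b + s)^(n-i)"
      by (simp only: sum_distrib_left[symmetric] binomial_ring)
    finally show "(\<Sum>m=i..n. of_nat (n choose m) * s^(n-m) * b^m * ((-1)^(m-i) * of_nat (m choose i) * e i))
       = of_nat (n choose i) * e i * b^i * (s-b)^(n-i)" by (simp only: neg_plus_eq)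
  qed
  finally show ?thesis .
qed

theorem corollary5:
  fixes a b :: complex and n :: nat
  shows "(\<Sum>k=0..n. of_nat (n choose k) * a ^ k * b ^ (n - k) * complex_of_real (harm3 k)) =
    complex_of_real (harm3 n) * (a + b) ^ n
    - 3 * (\<Sum>k=1..n. (a + b) ^ (n - k) * b ^ k *
        complex_of_real ((harm1 (k - 1) ^ 2 - harm2 (k - 1) - 2 * harm1 (k - 1) * harm1 (n - k)
                          + harm1 (n - k) ^ 2 - harm2 (n - k)) / real k))"
proof -
  define s where "s = a + b"
  define E where "E = (\<lambda>i. harm3 n - harm3 (n - i))"
  define e where "e = (\<lambda>i. complex_of_real (E i))"
  have G: "3 * complex_of_real (FF n k / real k) = of_nat (n choose k) * complex_of_real (altS E k)"
    if k: "1 \<le> k" "k \<le> n" for k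
  proof -
    have C: "real (n choose k) > 0" using k by simp
    have "altS E k = 3 * FF n k / (real k * real (n choose k))" unfolding E_def using altD[OF k] .
    then have "real (n choose k) * altS E k = 3 * (FF n k / real k)" using C by (simp add: field_simps)
    then have "complex_of_real (real (n choose k) * altS E k) = complex_of_real (3 * (FF n k / real k))" by simp
    then show ?thesis by simp
  qed
  have altC: "complex_of_real (altS E m) = (\<Sum>i\<le>m. (-1)^(m-i) * of_nat (m choose i) * e i)" for m
    unfolding altS_def e_def by simp
  have "3 * (\<Sum>k=1..n. s ^ (n - k) * b ^ k * complex_of_real (FF n k / real k))
      = (\<Sum>k=1..n. of_nat (n choose k) * s ^ (n - k) * b ^ k * complex_of_real (altS E k))"
    unfolding sum_distrib_left
  proof (rule sum.cong[OF refl])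
    fix k assume "k \<in> {1..n}"
    then have k: "1 \<le> k" "k \<le> n" by auto
    show "3 * (s ^ (n - k) * b ^ k * complex_of_real (FF n k / real k)) =
      of_nat (n choose k) * s ^ (n - k) * b ^ k * complex_of_real (altS E k)"
    proof -
      have "3 * (s ^ (n - k) * b ^ k * complex_of_real (FF n k / real k))
          = s ^ (n - k) * b ^ k * (3 * complex_of_real (FF n k / real k))" by (simp only: mult_ac)
      also have "\<dots> = s ^ (n - k) * b ^ k * (of_nat (n choose k) * complex_of_real (altS E k))"
        by (simp only: G[OF k])
      also have "\<dots> = of_nat (n choose k) * s ^ (n - k) * b ^ k * complex_of_real (altS E k)"
        by (simp only: mult_ac)
      finally show ?thesis .
    qed
  qed
  also have "\<dots> = (\<Sum>k\<le>n. of_nat (n choose k) * s ^ (n - k) * b ^ k * complex_of_real (altS E k))"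
  proof -
    have "{..n} = insert 0 {1..n}" by auto
    moreover have "altS E 0 = 0" by (simp add: altS_def E_def)
    ultimately show ?thesis by simp
  qed
  also have "\<dots> = (\<Sum>k\<le>n. of_nat (n choose k) * s ^ (n - k) * b ^ k * (\<Sum>i\<le>k. (-1)^(k-i) * of_nat (k choose i) * e i))"
    by (simp only: altC)
  also have "\<dots> = (\<Sum>i\<le>n. of_nat (n choose i) * e i * b^i * (s-b)^(n-i))"
    by (rule lemE)
  also have "\<dots> = (\<Sum>i\<le>n. complex_of_real (harm3 n) * (of_nat (n choose i) * b^i * a^(n-i))
         - of_nat (n choose i) * b^i * a^(n-i) * complex_of_real (harm3 (n - i)))"
    by (rule sum.cong) (simp_all add: s_def e_def E_def algebra_simps)
  also have "\<dots> = complex_of_real (harm3 n) * s ^ n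
      - (\<Sum>i\<le>n. of_nat (n choose i) * b^i * a^(n-i) * complex_of_real (harm3 (n - i)))"
    by (simp only: sum_subtractf sum_distrib_left[symmetric] s_def add.commute[of a b] binomial_ring)
  also have "(\<Sum>i\<le>n. of_nat (n choose i) * b^i * a^(n-i) * complex_of_real (harm3 (n - i)))
     = (\<Sum>k=0..n. of_nat (n choose k) * a ^ k * b ^ (n - k) * complex_of_real (harm3 k))"
  proof -
    have "(\<Sum>k=0..n. of_nat (n choose k) * a ^ k * b ^ (n - k) * complex_of_real (harm3 k))
      = (\<Sum>k=0..n. of_nat (n choose (n + 0 - k)) * a ^ (n + 0 - k) * b ^ (n - (n + 0 - k)) * complex_of_real (harm3 (n + 0 - k)))"
      by (rule sum.atLeastAtMost_rev)
    also have "\<dots> = (\<Sum>i\<le>n. of_nat (n choose i) * b^i * a^(n-i) * complex_of_real (harm3 (n - i)))"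
      unfolding atLeast0AtMost
      by (rule sum.cong[OF refl]) (simp add: binomial_symmetric[symmetric] mult_ac)
    finally show ?thesis by simp
  qed
  finally have main: "3 * (\<Sum>k=1..n. s ^ (n - k) * b ^ k * complex_of_real (FF n k / real k)) =
      complex_of_real (harm3 n) * s ^ n - (\<Sum>k=0..n. of_nat (n choose k) * a ^ k * b ^ (n - k) * complex_of_real (harm3 k))" .
  show ?thesis using main unfolding s_def FF_def by (simp add: algebra_simps)
qed

end
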